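(* Assume $A_n$ satisfies (C1) and (C2), and let $(\beta_0,B_0)\in\Theta$. Then there exists $\delta>0$ such that $$\limsup_{n\to\infty}\frac1n\log\mathbb P_{n,\beta_0,B_0}\Big(\Big|\sum_{i=1}^nX_im_i(\mathbf X)\Big|<n\delta\Big)<0.$$
   Context: For each $n$, $A_n$ is a known symmetric $n\times n$ matrix with non-negative entries and zero diagonal. The Ising model is $\mathbb P_{n,\beta,B}(\mathbf X=\mathbf x)=Z_n(\beta,B)^{-1}\exp(\frac{\beta}{2}\mathbf x^\top A_n\mathbf x+B\sum_i x_i)$ on $\{-1,1\}^n$. (C1): there is a constant $\gamma<\infty$ with $\max_{i}\sum_{j}A_n(i,j)\le\gamma$ for all $n$; (C2): $\liminf_n\frac1n\sum_{i,j}A_n(i,j)>0$. $\Theta=\{(\beta,B):\beta>0,B\ne0\}$. $m_i(\mathbf x)=\sum_jA_n(i,j)x_j$. *)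

theory Defs
  imports "HOL-Analysis.Analysis"
begin

text \<open>A matrix sequence is represented as A :: nat => nat => nat => real, where
  A n i j is the (i,j) entry of the n x n matrix A_n (indices i, j < n).\<close>

definition spin_configs :: "nat \<Rightarrow> (nat \<Rightarrow> real) set" where
  "spin_configs n = PiE {..<n} (\<lambda>_. {-1, 1})"

definition local_field :: "(nat \<Rightarrow> nat \<Rightarrow> nat \<Rightarrow> real) \<Rightarrow> nat \<Rightarrow> (nat \<Rightarrow> real) \<Rightarrow> nat \<Rightarrow> real" where
  "local_field A n x i = (\<Sum>j<n. A n i j * x j)"

definition ising_weight :: "(nat \<Rightarrow> nat \<Rightarrow> nat \<Rightarrow> real) \<Rightarrow> nat \<Rightarrow> real \<Rightarrow> real \<Rightarrow> (nat \<Rightarrow> real) \<Rightarrow> real" where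
  "ising_weight A n \<beta> B x =
     exp (\<beta> / 2 * (\<Sum>i<n. \<Sum>j<n. x i * A n i j * x j) + B * (\<Sum>i<n. x i))"

definition ising_Z :: "(nat \<Rightarrow> nat \<Rightarrow> nat \<Rightarrow> real) \<Rightarrow> nat \<Rightarrow> real \<Rightarrow> real \<Rightarrow> real" where
  "ising_Z A n \<beta> B = (\<Sum>x\<in>spin_configs n. ising_weight A n \<beta> B x)"

definition ising_prob :: "(nat \<Rightarrow> nat \<Rightarrow> nat \<Rightarrow> real) \<Rightarrow> nat \<Rightarrow> real \<Rightarrow> real \<Rightarrow> ((nat \<Rightarrow> real) \<Rightarrow> bool) \<Rightarrow> real" where
  "ising_prob A n \<beta> B P =
     (\<Sum>x\<in>{x\<in>spin_configs n. P x}. ising_weight A n \<beta> B x) / ising_Z A n \<beta> B"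

definition log_ereal :: "real \<Rightarrow> ereal" where
  "log_ereal p = (if p = 0 then -\<infinity> else ereal (ln p))"

end

theory Submission imports Defs begin

lemma sum_spin_prod:
  fixes h :: "nat \<Rightarrow> real \<Rightarrow> real"
  shows "(\<Sum>x\<in>spin_configs n. \<Prod>k<n. h k (x k)) = (\<Prod>k<n. h k 1 + h k (-1))"
proof -
  have "(\<Prod>k<n. \<Sum>v\<in>{-1,1}. h k v) = (\<Sum>x\<in>spin_configs n. \<Prod>k<n. h k (x k))"
    unfolding spin_configs_def by (rule prod_sum_PiE) auto
  moreover have "(\<Sum>v\<in>{-1,1::real}. h k v) = h k 1 + h k (-1)" for k by simp
  ultimately show ?thesis by simp
qed

lemma w0_exp: "exp (B * (\<Sum>k<(n::nat). (x::nat\<Rightarrow>real) k)) = (\<Prod>k<n. exp (B * x k))"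
  unfolding sum_distrib_left by (subst exp_sum) auto

lemma sum_w0: "(\<Sum>x\<in>spin_configs n. exp (B * (\<Sum>k<n. x k))) = (2 * cosh B) ^ n"
proof -
  have "(\<Sum>x\<in>spin_configs n. exp (B * (\<Sum>k<n. x k))) = (\<Prod>k<n. exp (B*1) + exp (B * -1))"
    unfolding w0_exp by (rule sum_spin_prod)
  also have "exp (B*1) + exp (B * -1) = 2 * cosh B" by (simp add: cosh_def)
  finally show ?thesis by simp
qed

lemma sum_w0_pair:
  assumes "i < n" "j < n" "i \<noteq> j"
  shows "(\<Sum>x\<in>spin_configs n. exp (B * (\<Sum>k<n. x k)) * (x i * x j)) = (2 * sinh B)^2 * (2 * cosh B) ^ (n - 2)"
proof -
  define h where "h k v = exp (B * v) * (if k = i \<or> k = j then v else 1)" for k v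
  have "exp (B * (\<Sum>k<n. x k)) * (x i * x j) = (\<Prod>k<n. h k (x k))" for x
  proof -
    have "(\<Prod>k<n. h k (x k)) = (\<Prod>k<n. exp (B * x k)) * (\<Prod>k<n. (if k = i \<or> k = j then x k else 1))"
      unfolding h_def prod.distrib ..
    also have "(\<Prod>k<n. (if k = i \<or> k = j then x k else 1)) = (\<Prod>k\<in>{..<n} \<inter> {k. k = i \<or> k = j}. x k)"
      by (simp add: prod.If_cases)
    also have "{..<n} \<inter> {k. k = i \<or> k = j} = {i, j}" using assms by auto
    finally show ?thesis using assms by (simp add: w0_exp)
  qed
  hence "(\<Sum>x\<in>spin_configs n. exp (B * (\<Sum>k<n. x k)) * (x i * x j)) = (\<Prod>k<n. h k 1 + h k (-1))"
    by (simp add: sum_spin_prod)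
  also have "\<dots> = (\<Prod>k<n. if k \<in> {i,j} then 2 * sinh B else 2 * cosh B)"
    by (rule prod.cong) (auto simp: h_def sinh_def cosh_def)
  also have "\<dots> = (2 * sinh B) ^ card ({..<n} \<inter> {i,j}) * (2 * cosh B) ^ card ({..<n} - {i,j})"
  proof -
    have sets: "{..<n} \<inter> {k. k = i \<or> k = j} = {..<n} \<inter> {i,j}" "{..<n} \<inter> - {k. k=i \<or> k=j} = {..<n} - {i,j}"
      by auto
    show ?thesis by (simp add: prod.If_cases sets del: power_mult_distrib)
  qed
  also have "card ({..<n} \<inter> {i,j}) = 2" using assms by (simp add: Int_absorb1)
  also have "card ({..<n} - {i,j}) = n - 2" using assms by (simp add: card_Diff_subset)
  finally show ?thesis .
qed


lemma bound_n:
  fixes A :: "nat \<Rightarrow> nat \<Rightarrow> nat \<Rightarrow> real" and \<beta> B c :: real and n :: nat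
  assumes diag: "\<And>i. i < n \<Longrightarrow> A n i i = 0"
    and n2: "n \<ge> 2" and beta: "\<beta> > 0"
    and S: "c * n \<le> (\<Sum>i<n. \<Sum>j<n. A n i j)"
  defines "t2 \<equiv> (sinh B / cosh B)^2"
  shows "ising_prob A n \<beta> B (\<lambda>x. \<bar>\<Sum>i<n. x i * local_field A n x i\<bar> < real n * (t2 * c / 2))
           \<le> exp (- (\<beta> * t2 * c / 4) * n)"
proof -
  define SC where "SC = spin_configs n"
  have finSC: "finite SC" unfolding SC_def spin_configs_def by (auto intro!: finite_PiE)
  define Q where "Q x = (\<Sum>i<n. \<Sum>j<n. x i * A n i j * x j)" for x :: "nat \<Rightarrow> real"
  define w0 where "w0 x = exp (B * (\<Sum>k<n. x k))" for x :: "nat \<Rightarrow> real"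
  define W0 where "W0 = (2 * cosh B) ^ n"
  define SS where "SS = (\<Sum>i<n. \<Sum>j<n. A n i j)"
  define \<delta> where "\<delta> = t2 * c / 2"
  define a where "a = \<beta> / 2 * (t2 * SS)"
  have W0pos: "W0 > 0" unfolding W0_def by (simp add: cosh_real_pos)
  have w0pos: "w0 x > 0" for x unfolding w0_def by simp
  have sumw0: "(\<Sum>x\<in>SC. w0 x) = W0" unfolding SC_def w0_def W0_def by (rule sum_w0)
  have Qeq: "(\<Sum>i<n. x i * local_field A n x i) = Q x" for x
    unfolding local_field_def Q_def sum_distrib_left by (simp add: mult_ac)
  have weq: "ising_weight A n \<beta> B x = exp (\<beta>/2 * Q x) * w0 x" for x
    unfolding ising_weight_def Q_def w0_def by (simp add: exp_add)
  define g where "g = (2 * sinh B)^2 * (2 * cosh B) ^ (n - 2)"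
  have gW: "g = t2 * W0"
  proof -
    have "cosh B \<noteq> 0" using cosh_real_pos[of B] by simp
    moreover have "(2 * cosh B) ^ n = (2 * cosh B)^2 * (2 * cosh B) ^ (n - 2)"
    proof -
      have "(2 * cosh B) ^ n = (2 * cosh B) ^ ((n - 2) + 2)" using n2 by (metis le_add_diff_inverse2)
      also have "\<dots> = (2 * cosh B)^2 * (2 * cosh B) ^ (n - 2)" by (simp only: power_add mult.commute)
      finally show ?thesis .
    qed
    ultimately show ?thesis unfolding g_def t2_def W0_def by (simp add: power_divide field_simps)
  qed
  have EQ: "(\<Sum>x\<in>SC. Q x * w0 x) = t2 * SS * W0"
  proof -
    have "(\<Sum>x\<in>SC. Q x * w0 x) = (\<Sum>x\<in>SC. \<Sum>i<n. \<Sum>j<n. A n i j * (w0 x * (x i * x j)))"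
      unfolding Q_def sum_distrib_right by (simp add: mult_ac)
    also have "\<dots> = (\<Sum>i<n. \<Sum>j<n. \<Sum>x\<in>SC. A n i j * (w0 x * (x i * x j)))"
      by (simp add: sum.swap[of _ SC] sum.swap[of _ SC "{..<n}"])
    also have "\<dots> = (\<Sum>i<n. \<Sum>j<n. A n i j * g)"
    proof (intro sum.cong refl)
      fix i j assume ij: "i \<in> {..<n}" "j \<in> {..<n}"
      show "(\<Sum>x\<in>SC. A n i j * (w0 x * (x i * x j))) = A n i j * g"
      proof (cases "i = j")
        case True thus ?thesis using diag ij by simp
      next
        case False
        thus ?thesis using ij sum_w0_pair[of i n j B]
          unfolding SC_def w0_def g_def by (simp add: sum_distrib_left[symmetric])
      qed
    qed
    also have "\<dots> = g * SS" unfolding SS_def by (simp add: sum_distrib_left mult.commute)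
    finally show ?thesis using gW by simp
  qed
  have Zlow: "ising_Z A n \<beta> B \<ge> exp a * W0"
  proof -
    have "exp a * W0 = (\<Sum>x\<in>SC. exp a * (1 + (\<beta>/2 * Q x - a)) * w0 x)"
    proof -
      have "(\<Sum>x\<in>SC. exp a * (1 + (\<beta>/2 * Q x - a)) * w0 x)
          = exp a * ((\<Sum>x\<in>SC. w0 x) + \<beta>/2 * (\<Sum>x\<in>SC. Q x * w0 x) - a * (\<Sum>x\<in>SC. w0 x))"
        by (simp add: algebra_simps sum.distrib sum_subtractf sum_distrib_left)
      also have "\<dots> = exp a * W0" unfolding sumw0 EQ a_def by (simp add: algebra_simps)
      finally show ?thesis by simp
    qed
    also have "\<dots> \<le> (\<Sum>x\<in>SC. exp (\<beta>/2 * Q x) * w0 x)"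
    proof (rule sum_mono)
      fix x
      have "1 + (\<beta>/2 * Q x - a) \<le> exp (\<beta>/2 * Q x - a)" by (rule exp_ge_add_one_self)
      hence "exp a * (1 + (\<beta>/2 * Q x - a)) \<le> exp a * exp (\<beta>/2 * Q x - a)" by simp
      also have "\<dots> = exp (\<beta>/2 * Q x)" by (simp add: exp_diff)
      finally show "exp a * (1 + (\<beta>/2 * Q x - a)) * w0 x \<le> exp (\<beta>/2 * Q x) * w0 x"
        using w0pos[of x] by (simp add: mult_right_mono)
    qed
    also have "\<dots> = ising_Z A n \<beta> B" unfolding ising_Z_def SC_def by (simp add: weq)
    finally show ?thesis .
  qed
  have Zpos: "ising_Z A n \<beta> B > 0" using Zlow W0pos by (smt (verit) exp_gt_zero mult_pos_pos)
  have bad: "(\<Sum>x\<in>{x\<in>SC. \<bar>\<Sum>i<n. x i * local_field A n x i\<bar> < real n * \<delta>}. ising_weight A n \<beta> B x)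
      \<le> exp (\<beta>/2 * (n * \<delta>)) * W0"
  proof -
    let ?E = "{x\<in>SC. \<bar>\<Sum>i<n. x i * local_field A n x i\<bar> < real n * \<delta>}"
    have "(\<Sum>x\<in>?E. ising_weight A n \<beta> B x) \<le> (\<Sum>x\<in>?E. exp (\<beta>/2 * (n * \<delta>)) * w0 x)"
    proof (rule sum_mono)
      fix x assume "x \<in> ?E"
      hence "Q x < n * \<delta>" using Qeq[of x] by auto
      hence "exp (\<beta>/2 * Q x) \<le> exp (\<beta>/2 * (n * \<delta>))" using beta by simp
      thus "ising_weight A n \<beta> B x \<le> exp (\<beta>/2 * (n * \<delta>)) * w0 x"
        unfolding weq using w0pos[of x] by (simp add: mult_right_mono)
    qed
    also have "\<dots> = exp (\<beta>/2 * (n * \<delta>)) * (\<Sum>x\<in>?E. w0 x)" by (simp add: sum_distrib_left)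
    also have "(\<Sum>x\<in>?E. w0 x) \<le> (\<Sum>x\<in>SC. w0 x)"
      by (rule sum_mono2[OF finSC]) (auto intro: less_imp_le[OF w0pos])
    finally show ?thesis using sumw0 by (simp add: mult_left_mono)
  qed
  have "ising_prob A n \<beta> B (\<lambda>x. \<bar>\<Sum>i<n. x i * local_field A n x i\<bar> < real n * \<delta>)
      \<le> exp (\<beta>/2 * (n * \<delta>)) * W0 / (exp a * W0)"
    unfolding ising_prob_def SC_def[symmetric]
    using bad Zlow Zpos W0pos by (intro frac_le) auto
  also have "\<dots> = exp (\<beta>/2 * (n * \<delta>) - a)" using W0pos by (simp add: exp_diff)
  also have "\<dots> \<le> exp (- (\<beta> * t2 * c / 4) * n)"
  proof -
    have t2: "t2 \<ge> 0" unfolding t2_def by simp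
    have "\<beta>/2 * t2 * (c * n) \<le> \<beta>/2 * t2 * SS" using S t2 beta unfolding SS_def
      by (intro mult_left_mono) auto
    thus ?thesis unfolding a_def \<delta>_def by (simp add: algebra_simps)
  qed
  finally show ?thesis unfolding \<delta>_def .
qed


theorem lemma2:
  fixes A :: "nat \<Rightarrow> nat \<Rightarrow> nat \<Rightarrow> real" and \<beta>0 B0 :: real
  assumes symm: "\<And>n i j. i < n \<Longrightarrow> j < n \<Longrightarrow> A n i j = A n j i"
    and nonneg: "\<And>n i j. i < n \<Longrightarrow> j < n \<Longrightarrow> A n i j \<ge> 0"
    and diag: "\<And>n i. i < n \<Longrightarrow> A n i i = 0"
    and C1: "\<exists>\<gamma>::real. \<forall>n i. i < n \<longrightarrow> (\<Sum>j<n. A n i j) \<le> \<gamma>"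
    and C2: "liminf (\<lambda>n. ereal ((1 / real n) * (\<Sum>i<n. \<Sum>j<n. A n i j))) > 0"
    and beta0: "\<beta>0 > 0" and B0: "B0 \<noteq> 0"
  shows "\<exists>\<delta>>0. limsup (\<lambda>n. ereal (1 / real n) *
            log_ereal (ising_prob A n \<beta>0 B0
              (\<lambda>x. \<bar>\<Sum>i<n. x i * local_field A n x i\<bar> < real n * \<delta>))) < 0"
proof -
  obtain z where z0: "0 < ereal z" and zl: "ereal z < liminf (\<lambda>n. ereal ((1 / real n) * (\<Sum>i<n. \<Sum>j<n. A n i j)))"
    using ereal_dense2[OF C2] by blast
  define c where "c = z"
  have c0: "c > 0" using z0 unfolding c_def by simp
  have evc: "eventually (\<lambda>n. c < (1 / real n) * (\<Sum>i<n. \<Sum>j<n. A n i j)) sequentially"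
    using less_LiminfD[OF zl] unfolding c_def by simp
  define t2 where "t2 = (sinh B0 / cosh B0)^2"
  have t2: "t2 > 0" unfolding t2_def using B0 cosh_real_pos[of B0] by simp
  define \<kappa> where "\<kappa> = \<beta>0 * t2 * c / 4"
  have kappa: "\<kappa> > 0" unfolding \<kappa>_def using beta0 t2 c0 by simp
  let ?f = "\<lambda>n. ereal (1 / real n) *
            log_ereal (ising_prob A n \<beta>0 B0
              (\<lambda>x. \<bar>\<Sum>i<n. x i * local_field A n x i\<bar> < real n * (t2 * c / 2)))"
  have ev: "eventually (\<lambda>n. ?f n \<le> ereal (- \<kappa>)) sequentially"
    using evc eventually_ge_at_top[of 2]
  proof eventually_elim
    case (elim n)
    hence n2: "n \<ge> 2" and np: "real n > 0" by auto
    have S: "c * n \<le> (\<Sum>i<n. \<Sum>j<n. A n i j)" using elim(1) np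
      by (simp add: field_simps)
    define P where "P = ising_prob A n \<beta>0 B0
              (\<lambda>x. \<bar>\<Sum>i<n. x i * local_field A n x i\<bar> < real n * (t2 * c / 2))"
    have Pb: "P \<le> exp (- \<kappa> * n)"
      unfolding P_def \<kappa>_def t2_def using bound_n[of n A, OF diag n2 beta0 S] by simp
    have P0: "P \<ge> 0" unfolding P_def ising_prob_def ising_Z_def ising_weight_def
      by (intro divide_nonneg_nonneg sum_nonneg) auto
    show ?case
    proof (cases "P = 0")
      case True
      thus ?thesis using np unfolding P_def[symmetric] log_ereal_def by simp
    next
      case False
      hence Pp: "P > 0" using P0 by simp
      have "ln P \<le> - \<kappa> * n" using Pb Pp by (metis ln_exp ln_le_cancel_iff exp_gt_zero)
      hence "ln P / n \<le> - \<kappa>" using np by (simp add: divide_le_eq)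
      thus ?thesis using False np unfolding P_def[symmetric] log_ereal_def by simp
    qed
  qed
  have "limsup ?f \<le> ereal (- \<kappa>)" by (rule Limsup_bounded[OF ev])
  also have "\<dots> < 0" using kappa by simp
  finally show ?thesis using t2 c0 by (intro exI[of _ "t2 * c / 2"]) auto
qed

end
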